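(* Let $H$ be a separable infinite-dimensional complex Hilbert space and let $X$ be a closed subspace of $H$ whose dimension and codimension are both infinite. Then there is a closed subspace $Q$ of $H$ of infinite dimension and infinite codimension such that $Q\cap X^{\perp}=0$ and $Q^{\perp}\cap X^{\perp}=0$. *)

theory Defs
  imports Complex_Main "HOL-Library.Countable_Set"
begin

text \<open>An abstract complex Hilbert space: the carrier is the whole type 'a
  (with its additive group structure), sm is complex scalar multiplication
  and ip the inner product (linear in the first argument).\<close>

definition hnorm :: "('a \<Rightarrow> 'a \<Rightarrow> complex) \<Rightarrow> 'a \<Rightarrow> real" where
  "hnorm ip x = sqrt (Re (ip x x))"

definition complex_inner_product_space ::
  "(complex \<Rightarrow> 'a::ab_group_add \<Rightarrow> 'a) \<Rightarrow> ('a \<Rightarrow> 'a \<Rightarrow> complex) \<Rightarrow> bool" where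
  "complex_inner_product_space sm ip \<longleftrightarrow>
     (\<forall>a x y. sm a (x + y) = sm a x + sm a y) \<and>
     (\<forall>a b x. sm (a + b) x = sm a x + sm b x) \<and>
     (\<forall>a b x. sm a (sm b x) = sm (a * b) x) \<and>
     (\<forall>x. sm 1 x = x) \<and>
     (\<forall>x y z. ip (x + y) z = ip x z + ip y z) \<and>
     (\<forall>a x y. ip (sm a x) y = a * ip x y) \<and>
     (\<forall>x y. ip y x = cnj (ip x y)) \<and>
     (\<forall>x. Re (ip x x) \<ge> 0) \<and>
     (\<forall>x. ip x x = 0 \<longrightarrow> x = 0)"

definition h_cauchy :: "('a::ab_group_add \<Rightarrow> 'a \<Rightarrow> complex) \<Rightarrow> (nat \<Rightarrow> 'a) \<Rightarrow> bool" where
  "h_cauchy ip f \<longleftrightarrow> (\<forall>e>0. \<exists>N. \<forall>m\<ge>N. \<forall>n\<ge>N. hnorm ip (f m - f n) < e)"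

definition h_tendsto :: "('a::ab_group_add \<Rightarrow> 'a \<Rightarrow> complex) \<Rightarrow> (nat \<Rightarrow> 'a) \<Rightarrow> 'a \<Rightarrow> bool" where
  "h_tendsto ip f l \<longleftrightarrow> (\<forall>e>0. \<exists>N. \<forall>n\<ge>N. hnorm ip (f n - l) < e)"

definition complex_hilbert_space ::
  "(complex \<Rightarrow> 'a::ab_group_add \<Rightarrow> 'a) \<Rightarrow> ('a \<Rightarrow> 'a \<Rightarrow> complex) \<Rightarrow> bool" where
  "complex_hilbert_space sm ip \<longleftrightarrow> complex_inner_product_space sm ip \<and>
     (\<forall>f. h_cauchy ip f \<longrightarrow> (\<exists>l. h_tendsto ip f l))"

definition h_separable :: "('a::ab_group_add \<Rightarrow> 'a \<Rightarrow> complex) \<Rightarrow> bool" where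
  "h_separable ip \<longleftrightarrow> (\<exists>D. countable D \<and> (\<forall>x. \<forall>e>0. \<exists>d\<in>D. hnorm ip (x - d) < e))"

definition cspan :: "(complex \<Rightarrow> 'a::ab_group_add \<Rightarrow> 'a) \<Rightarrow> 'a set \<Rightarrow> 'a set" where
  "cspan sm S = {x. \<exists>F c. finite F \<and> F \<subseteq> S \<and> x = (\<Sum>v\<in>F. sm (c v) v)}"

definition h_subspace :: "(complex \<Rightarrow> 'a::ab_group_add \<Rightarrow> 'a) \<Rightarrow> 'a set \<Rightarrow> bool" where
  "h_subspace sm X \<longleftrightarrow> 0 \<in> X \<and> (\<forall>x\<in>X. \<forall>y\<in>X. x + y \<in> X) \<and> (\<forall>a. \<forall>x\<in>X. sm a x \<in> X)"

definition h_closed :: "('a::ab_group_add \<Rightarrow> 'a \<Rightarrow> complex) \<Rightarrow> 'a set \<Rightarrow> bool" where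
  "h_closed ip X \<longleftrightarrow> (\<forall>f l. (\<forall>n. f n \<in> X) \<and> h_tendsto ip f l \<longrightarrow> l \<in> X)"

definition closed_subspace ::
  "(complex \<Rightarrow> 'a::ab_group_add \<Rightarrow> 'a) \<Rightarrow> ('a \<Rightarrow> 'a \<Rightarrow> complex) \<Rightarrow> 'a set \<Rightarrow> bool" where
  "closed_subspace sm ip X \<longleftrightarrow> h_subspace sm X \<and> h_closed ip X"

definition infinite_dim :: "(complex \<Rightarrow> 'a::ab_group_add \<Rightarrow> 'a) \<Rightarrow> 'a set \<Rightarrow> bool" where
  "infinite_dim sm X \<longleftrightarrow> \<not> (\<exists>F. finite F \<and> X \<subseteq> cspan sm F)"

text \<open>Infinite codimension: the quotient of the whole space by X is infinite dimensional.\<close>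
definition infinite_codim :: "(complex \<Rightarrow> 'a::ab_group_add \<Rightarrow> 'a) \<Rightarrow> 'a set \<Rightarrow> bool" where
  "infinite_codim sm X \<longleftrightarrow> \<not> (\<exists>F. finite F \<and> UNIV \<subseteq> cspan sm (X \<union> F))"

definition orth_compl :: "('a \<Rightarrow> 'a \<Rightarrow> complex) \<Rightarrow> 'a set \<Rightarrow> 'a set" where
  "orth_compl ip X = {y. \<forall>x\<in>X. ip x y = 0}"

end

theory Submission
  imports Defs
begin

locale cips =
  fixes sm :: "complex \<Rightarrow> 'a::ab_group_add \<Rightarrow> 'a"
    and ip :: "'a \<Rightarrow> 'a \<Rightarrow> complex"
  assumes cips: "complex_inner_product_space sm ip"
begin

lemma sm_addR: "sm a (x + y) = sm a x + sm a y"
  and sm_addL: "sm (a + b) x = sm a x + sm b x"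
  and sm_sm: "sm a (sm b x) = sm (a * b) x"
  and sm_one: "sm 1 x = x"
  and ip_addL: "ip (x + y) z = ip x z + ip y z"
  and ip_smL: "ip (sm a x) y = a * ip x y"
  and ip_sym: "ip y x = cnj (ip x y)"
  and ip_pos: "Re (ip x x) \<ge> 0"
  and ip_eq0: "ip x x = 0 \<Longrightarrow> x = 0"
  using cips unfolding complex_inner_product_space_def by blast+

sublocale vs: vector_space sm
  by unfold_locales (auto simp: sm_addR sm_addL sm_sm sm_one)

lemma ip_addR: "ip x (y + z) = ip x y + ip x z"
proof -
  have 1: "ip x (y + z) = cnj (ip (y + z) x)" by (rule ip_sym)
  have 2: "ip x y = cnj (ip y x)" by (rule ip_sym)
  have 3: "ip x z = cnj (ip z x)" by (rule ip_sym)
  show ?thesis unfolding 1 2 3 ip_addL by simp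
qed

lemma ip_smR: "ip x (sm a y) = cnj a * ip x y"
proof -
  have 1: "ip x (sm a y) = cnj (ip (sm a y) x)" by (rule ip_sym)
  have 2: "ip x y = cnj (ip y x)" by (rule ip_sym)
  show ?thesis unfolding 1 2 ip_smL by simp
qed

lemma ip_0L[simp]: "ip 0 y = 0"
proof -
  have "ip (0 + 0) y = ip 0 y + ip 0 y" by (rule ip_addL)
  then have "ip 0 y = ip 0 y + ip 0 y" by (simp only: add_0_left)
  then show ?thesis by (simp only: add_cancel_right_right)
qed

lemma ip_0R[simp]: "ip y 0 = 0"
proof -
  have "ip y (0 + 0) = ip y 0 + ip y 0" by (rule ip_addR)
  then have "ip y 0 = ip y 0 + ip y 0" by (simp only: add_0_left)
  then show ?thesis by (simp only: add_cancel_right_right)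
qed

lemma ip_minusL: "ip (- x) y = - ip x y"
proof -
  have "ip (- x + x) y = ip (- x) y + ip x y" by (rule ip_addL)
  then have "ip (- x) y + ip x y = 0" by simp
  then show ?thesis by (simp add: eq_neg_iff_add_eq_0)
qed

lemma ip_minusR: "ip y (- x) = - ip y x"
proof -
  have "ip y (- x + x) = ip y (- x) + ip y x" by (rule ip_addR)
  then have "ip y (- x) + ip y x = 0" by simp
  then show ?thesis by (simp add: eq_neg_iff_add_eq_0)
qed

lemma ip_diffL: "ip (x - y) z = ip x z - ip y z"
  by (simp only: diff_conv_add_uminus ip_addL ip_minusL)

lemma ip_diffR: "ip z (x - y) = ip z x - ip z y"
  by (simp only: diff_conv_add_uminus ip_addR ip_minusR)

lemma ip_sumL: "ip (sum f A) y = (\<Sum>i\<in>A. ip (f i) y)"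
  by (induct A rule: infinite_finite_induct) (auto simp: ip_addL)

lemma ip_sumR: "ip y (sum f A) = (\<Sum>i\<in>A. ip y (f i))"
  by (induct A rule: infinite_finite_induct) (auto simp: ip_addR)

lemma ip_self_real: "ip x x = complex_of_real (Re (ip x x))"
proof -
  have "ip x x = cnj (ip x x)" using ip_sym by blast
  then have h1: "Im (ip x x) = Im (cnj (ip x x))" by (rule arg_cong)
  have h2: "Im (cnj (ip x x)) = - Im (ip x x)" by simp
  from h1 h2 have "Im (ip x x) = 0" by linarith
  then show ?thesis by (simp add: complex_eq_iff)
qed

lemma hnorm_sq: "(hnorm ip x)^2 = Re (ip x x)"
  unfolding hnorm_def using ip_pos[of x] by simp

lemma hnorm_nonneg: "hnorm ip x \<ge> 0"
  unfolding hnorm_def using ip_pos[of x] by simp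

lemma hnorm_zero_iff: "hnorm ip x = 0 \<longleftrightarrow> x = 0"
proof
  assume "hnorm ip x = 0"
  then have "Re (ip x x) = 0" unfolding hnorm_def by simp
  then have "ip x x = 0" by (subst ip_self_real) simp
  then show "x = 0" by (rule ip_eq0)
qed (simp add: hnorm_def)

lemma cauchy_schwarz: "cmod (ip x y) \<le> hnorm ip x * hnorm ip y"
proof (cases "y = 0")
  case True then show ?thesis by (simp add: hnorm_nonneg)
next
  case False
  define a where "a = ip x y"
  define b where "b = Re (ip y y)"
  have yy: "ip y y = complex_of_real b" using ip_self_real b_def by simp
  have "b \<noteq> 0"
  proof
    assume "b = 0"
    then have "ip y y = 0" using yy by simp
    then show False using ip_eq0 False by blast
  qed
  moreover have "b \<ge> 0" unfolding b_def by (rule ip_pos)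
  ultimately have bpos: "b > 0" by simp
  define t where "t = a / complex_of_real b"
  define w where "w = x - sm t y"
  have yx: "ip y x = cnj a" unfolding a_def by (rule ip_sym)
  have "ip w w = ip x x - cnj t * a - t * cnj a + t * cnj t * complex_of_real b"
    unfolding w_def by (simp add: ip_diffL ip_diffR ip_smL ip_smR yy yx a_def[symmetric] algebra_simps)
  also have "cnj t * a = a * cnj a / complex_of_real b" unfolding t_def by simp
  also have "t * cnj a = a * cnj a / complex_of_real b" unfolding t_def by simp
  also have "t * cnj t * complex_of_real b = a * cnj a / complex_of_real b"
    unfolding t_def using bpos by (simp add: field_simps)
  also have "a * cnj a / complex_of_real b = complex_of_real ((cmod a)^2 / b)"
    by (simp add: complex_norm_square[symmetric])
  also have "ip x x - complex_of_real ((cmod a)\<^sup>2 / b) - complex_of_real ((cmod a)\<^sup>2 / b) +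
    complex_of_real ((cmod a)\<^sup>2 / b) = ip x x - complex_of_real ((cmod a)\<^sup>2 / b)" by simp
  finally have "Re (ip w w) = Re (ip x x) - (cmod a)^2 / b" by simp
  with ip_pos[of w] have "(cmod a)^2 / b \<le> Re (ip x x)" by simp
  then have "(cmod a)^2 \<le> Re (ip x x) * b" using bpos by (simp add: field_simps)
  then have "sqrt ((cmod a)^2) \<le> sqrt (Re (ip x x) * b)" by (rule real_sqrt_le_mono)
  then show ?thesis unfolding hnorm_def a_def b_def by (simp add: real_sqrt_mult)
qed

lemma hnorm_triangle: "hnorm ip (x + y) \<le> hnorm ip x + hnorm ip y"
proof -
  have e1: "Re (ip (x+y) (x+y)) = Re (ip x x) + Re (ip y y) + Re (ip x y + ip y x)"
    by (simp add: ip_addL ip_addR)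
  have e2: "Re (ip x y + ip y x) = 2 * Re (ip x y)"
    using ip_sym[where x=x and y=y] by simp
  have e3: "Re (ip x y) \<le> hnorm ip x * hnorm ip y"
    using cauchy_schwarz[of x y] complex_Re_le_cmod[of "ip x y"] by linarith
  have e4: "(hnorm ip x + hnorm ip y)^2 = Re (ip x x) + Re (ip y y) + 2 * (hnorm ip x * hnorm ip y)"
    by (simp add: power2_sum hnorm_sq)
  have "(hnorm ip (x+y))^2 \<le> (hnorm ip x + hnorm ip y)^2"
    unfolding hnorm_sq e4 using e1 e2 e3 by linarith
  then show ?thesis by (rule power2_le_imp_le[OF _ add_nonneg_nonneg[OF hnorm_nonneg hnorm_nonneg]])
qed

lemma hnorm_minus: "hnorm ip (- x) = hnorm ip x"
  unfolding hnorm_def by (simp add: ip_minusL ip_minusR)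

lemma hnorm_commute: "hnorm ip (x - y) = hnorm ip (y - x)"
  using hnorm_minus[of "x - y"] by simp

lemma cspan_eq: "cspan sm S = vs.span S"
proof (intro set_eqI iffI)
  fix x assume "x \<in> cspan sm S"
  then obtain F c where "finite F" "F \<subseteq> S" "x = (\<Sum>v\<in>F. sm (c v) v)"
    unfolding cspan_def by blast
  then show "x \<in> vs.span S" unfolding vs.span_explicit by blast
next
  fix x assume "x \<in> vs.span S"
  then obtain F c where "finite F" "F \<subseteq> S" "x = (\<Sum>v\<in>F. sm (c v) v)"
    unfolding vs.span_explicit by blast
  then show "x \<in> cspan sm S" unfolding cspan_def by blast
qed


lemma ip_zero_swap: "ip a b = 0 \<Longrightarrow> ip b a = 0"
  using ip_sym[where x=a and y=b] by simp

lemma subspace_h: "h_subspace sm X \<Longrightarrow> vs.subspace X"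
  unfolding h_subspace_def vs.subspace_def by simp

lemma subspace_oc: "vs.subspace (orth_compl ip A)"
  unfolding vs.subspace_def orth_compl_def by (simp add: ip_addR ip_smR)

lemma closed_oc: "h_closed ip (orth_compl ip A)"
  unfolding h_closed_def
proof (intro allI impI)
  fix f l assume H: "(\<forall>n. f n \<in> orth_compl ip A) \<and> h_tendsto ip f l"
  show "l \<in> orth_compl ip A" unfolding orth_compl_def
  proof (intro CollectI ballI)
    fix a assume a: "a \<in> A"
    show "ip a l = 0"
    proof (rule ccontr)
      assume ne: "ip a l \<noteq> 0"
      define c where "c = cmod (ip a l)"
      have cpos: "c > 0" using ne c_def by simp
      define e where "e = c / (hnorm ip a + 1)"
      have hn: "hnorm ip a \<ge> 0" by (rule hnorm_nonneg)
      have epos: "e > 0" unfolding e_def using cpos hn by simp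
      obtain n where n: "hnorm ip (f n - l) < e"
        using H epos unfolding h_tendsto_def by blast
      have "ip a (f n) = 0" using H a unfolding orth_compl_def by blast
      then have "ip a (f n - l) = - ip a l" by (simp add: ip_diffR)
      then have "c = cmod (ip a (f n - l))" unfolding c_def by simp
      also have "\<dots> \<le> hnorm ip a * hnorm ip (f n - l)" by (rule cauchy_schwarz)
      also have "\<dots> \<le> hnorm ip a * e" using n hn by (simp add: mult_left_mono)
      also have "\<dots> < c" unfolding e_def using cpos hn by (simp add: field_simps)
      finally show False by simp
    qed
  qed
qed

lemma closed_subspace_oc: "closed_subspace sm ip (orth_compl ip A)"
  unfolding closed_subspace_def h_subspace_def
  using subspace_oc[of A] closed_oc[of A] unfolding vs.subspace_def by simp

lemma total:
  assumes "\<forall>n. ip (c n) y = 0" and "\<forall>e>0. \<exists>n. hnorm ip (y - c n) < e"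
  shows "y = 0"
proof (rule ccontr)
  assume "y \<noteq> 0"
  then have "hnorm ip y \<noteq> 0" using hnorm_zero_iff by simp
  then have h: "hnorm ip y > 0" using hnorm_nonneg[of y] by simp
  then obtain n where n: "hnorm ip (y - c n) < hnorm ip y" using assms(2) by blast
  have "ip y y = ip (y - c n) y + ip (c n) y" by (simp add: ip_diffL)
  then have "ip y y = ip (y - c n) y" using assms(1) by simp
  then have "cmod (ip y y) \<le> hnorm ip (y - c n) * hnorm ip y" using cauchy_schwarz by simp
  also have "\<dots> < hnorm ip y * hnorm ip y" using n h by (simp add: mult_strict_right_mono)
  also have "\<dots> = Re (ip y y)" using hnorm_sq[of y] by (simp add: power2_eq_square)
  finally show False using complex_Re_le_cmod[of "ip y y"] by simp
qed

lemma indep_on: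
  assumes fin: "finite W" and on: "\<forall>a\<in>W. \<forall>b\<in>W. ip a b = (if a = b then 1 else 0)"
  shows "vs.independent W"
proof
  assume "vs.dependent W"
  then obtain u where u: "\<exists>v\<in>W. u v \<noteq> 0" "(\<Sum>v\<in>W. sm (u v) v) = 0"
    using vs.dependent_finite[OF fin] by blast
  then obtain v0 where v0: "v0 \<in> W" "u v0 \<noteq> 0" by blast
  have "0 = ip (\<Sum>v\<in>W. sm (u v) v) v0" using u(2) by simp
  also have "\<dots> = (\<Sum>v\<in>W. u v * ip v v0)" by (simp add: ip_sumL ip_smL)
  also have "\<dots> = (\<Sum>v\<in>W. if v = v0 then u v0 else 0)"
    by (rule sum.cong) (use on v0 in auto)
  also have "\<dots> = u v0" using fin v0 by simp
  finally show False using v0 by simp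
qed

lemma onseq_not_span:
  fixes w :: "nat \<Rightarrow> 'a"
  assumes on: "\<forall>i j. ip (w i) (w j) = (if i = j then 1 else 0)"
    and Z: "\<forall>z\<in>Z. \<forall>k. ip z (w k) = 0" and fin: "finite F"
  shows "\<exists>k. w k \<notin> vs.span (Z \<union> F)"
proof (rule ccontr)
  assume "\<not> ?thesis"
  then have all: "\<forall>k. w k \<in> vs.span (Z \<union> F)" by blast
  define N where "N = Suc (card F)"
  define P where "P v = (\<Sum>k<N. sm (ip v (w k)) (w k))" for v
  have "module_hom sm sm P"
    unfolding module_hom_iff
  proof (intro conjI allI)
    show "module sm" by (rule vs.module_axioms)
    show "module sm" by (rule vs.module_axioms)
    fix x y show "P (x + y) = P x + P y"
      unfolding P_def by (simp add: ip_addL sm_addL sum.distrib)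
  next
    fix a x show "P (sm a x) = sm a (P x)"
      unfolding P_def by (simp add: ip_smL vs.scale_sum_right sm_sm)
  qed
  then interpret P: module_hom sm sm P .
  have PZ: "P z = 0" if "z \<in> Z" for z
    unfolding P_def using Z that by simp
  have winj: "w i = w j \<longleftrightarrow> i = j" for i j
  proof
    assume wij: "w i = w j"
    show "i = j"
    proof (rule ccontr)
      assume "i \<noteq> j"
      then have "ip (w i) (w j) = 0" using on by simp
      moreover have "ip (w j) (w j) = 1" using on by simp
      ultimately show False using wij by simp
    qed
  qed simp
  have Pw: "P (w j) = w j" if "j < N" for j
  proof -
    have "P (w j) = (\<Sum>k<N. if k = j then w j else 0)"
      unfolding P_def by (rule sum.cong) (use on in auto)
    also have "\<dots> = w j" using that by simp
    finally show ?thesis .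
  qed
  define W where "W = w ` {..<N}"
  have finW: "finite W" unfolding W_def by simp
  have cardW: "card W = N" unfolding W_def
    by (subst card_image) (auto simp: inj_on_def winj)
  have onW: "\<forall>a\<in>W. \<forall>b\<in>W. ip a b = (if a = b then 1 else 0)"
    unfolding W_def using on winj by auto
  have "W \<subseteq> vs.span (P ` F)"
  proof
    fix v assume "v \<in> W"
    then obtain j where j: "j < N" "v = w j" unfolding W_def by blast
    have "v = P (w j)" using Pw j by simp
    also have "\<dots> \<in> P ` vs.span (Z \<union> F)" using all by blast
    also have "\<dots> = vs.span (P ` (Z \<union> F))" by (rule P.span_image[symmetric])
    also have "\<dots> \<subseteq> vs.span (insert 0 (P ` F))"
      by (rule vs.span_mono) (auto simp: PZ)
    also have "\<dots> = vs.span (P ` F)" by simp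
    finally show "v \<in> vs.span (P ` F)" .
  qed
  then have "card W \<le> card (P ` F)"
    using vs.independent_span_bound[of "P ` F" W] fin indep_on[OF finW onW] by simp
  also have "\<dots> \<le> card F" using fin by (rule card_image_le)
  finally show False using cardW N_def by simp
qed

definition step :: "'a set \<Rightarrow> 'a \<Rightarrow> 'a" where
  "step G x = x - (\<Sum>h\<in>G. sm (ip x h / ip h h) h)"

primrec gset :: "(nat \<Rightarrow> 'a) \<Rightarrow> nat \<Rightarrow> 'a set" where
  "gset c 0 = {}"
| "gset c (Suc n) = insert (step (gset c n) (c n)) (gset c n)"

definition gs :: "(nat \<Rightarrow> 'a) \<Rightarrow> nat \<Rightarrow> 'a" where
  "gs c n = step (gset c n) (c n)"

definition orthset :: "'a set \<Rightarrow> bool" where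
  "orthset G \<longleftrightarrow> (\<forall>a\<in>G. \<forall>b\<in>G. a \<noteq> b \<longrightarrow> ip a b = 0)"

lemma step_orth:
  assumes fin: "finite G" and og: "orthset G" and h: "h \<in> G"
  shows "ip (step G x) h = 0"
proof -
  have "ip (step G x) h = ip x h - (\<Sum>k\<in>G. (ip x k / ip k k) * ip k h)"
    unfolding step_def by (simp add: ip_diffL ip_sumL ip_smL)
  also have "(\<Sum>k\<in>G. (ip x k / ip k k) * ip k h) = (\<Sum>k\<in>G. if k = h then (ip x h / ip h h) * ip h h else 0)"
    by (rule sum.cong) (use og h in \<open>auto simp: orthset_def\<close>)
  also have "\<dots> = (ip x h / ip h h) * ip h h" using fin h by simp
  also have "\<dots> = ip x h"
  proof (cases "ip h h = 0")
    case True
    then have "h = 0" by (rule ip_eq0)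
    then show ?thesis by simp
  qed simp
  finally show ?thesis by simp
qed

lemma gset_props: "finite (gset c n) \<and> orthset (gset c n)"
proof (induct n)
  case 0 then show ?case by (simp add: orthset_def)
next
  case (Suc n)
  then have f: "finite (gset c n)" and o: "orthset (gset c n)" by auto
  have "orthset (insert (step (gset c n) (c n)) (gset c n))"
    unfolding orthset_def
  proof (intro ballI impI)
    fix a b assume a: "a \<in> insert (step (gset c n) (c n)) (gset c n)"
      and b: "b \<in> insert (step (gset c n) (c n)) (gset c n)" and ab: "a \<noteq> b"
    show "ip a b = 0"
    proof (cases "a = step (gset c n) (c n)")
      case True
      then have "b \<in> gset c n" using b ab by auto
      then show ?thesis using True step_orth[OF f o] by simp
    next
      case False
      then have a': "a \<in> gset c n" using a by auto
      show ?thesis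
      proof (cases "b = step (gset c n) (c n)")
        case True
        then show ?thesis using step_orth[OF f o a'] ip_zero_swap by simp
      next
        case False
        then have "b \<in> gset c n" using b by auto
        then show ?thesis using a' ab o unfolding orthset_def by blast
      qed
    qed
  qed
  then show ?case using f by simp
qed

lemma gset_eq: "gset c n = gs c ` {..<n}"
  by (induct n) (auto simp: gs_def lessThan_Suc)

lemma gs_orth_less:
  assumes "m < n" shows "ip (gs c n) (gs c m) = 0"
proof -
  have "gs c m \<in> gset c n" using assms gset_eq by auto
  then show ?thesis unfolding gs_def using step_orth gset_props by blast
qed

lemma gs_orth: "m \<noteq> n \<Longrightarrow> ip (gs c m) (gs c n) = 0"
proof -
  assume "m \<noteq> n"
  then consider "m < n" | "n < m" by linarith
  then show ?thesis
  proof cases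
    case 1 then have "ip (gs c n) (gs c m) = 0" by (rule gs_orth_less)
    then show ?thesis by (rule ip_zero_swap)
  next
    case 2 then show ?thesis by (rule gs_orth_less)
  qed
qed

lemma gs_in:
  assumes sY: "vs.subspace Y" and cY: "\<forall>n. c n \<in> Y"
  shows "gset c n \<subseteq> Y \<and> gs c n \<in> Y"
proof (induct n)
  case 0
  show ?case using sY cY unfolding gs_def step_def
    by (simp add: vs.subspace_diff vs.subspace_0)
next
  case (Suc n)
  have s: "gset c (Suc n) \<subseteq> Y" using Suc by (simp add: gs_def[symmetric])
  have "gs c (Suc n) \<in> Y" unfolding gs_def step_def
    by (rule vs.subspace_diff[OF sY cY[rule_format]], rule vs.subspace_sum[OF sY])
       (use s sY in \<open>auto intro: vs.subspace_scale\<close>)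
  then show ?case using s by simp
qed

lemma c_from_gs:
  assumes "\<forall>k. ip (gs c k) y = 0"
  shows "ip (c n) y = 0"
proof -
  define S where "S = (\<Sum>h\<in>gset c n. sm (ip (c n) h / ip h h) h)"
  have eq: "c n = gs c n + S"
    unfolding gs_def step_def S_def by simp
  have "ip (c n) y = ip (gs c n + S) y" by (rule arg_cong[OF eq])
  also have "\<dots> = ip (gs c n) y + (\<Sum>h\<in>gset c n. (ip (c n) h / ip h h) * ip h y)"
    unfolding S_def by (simp only: ip_addL ip_sumL ip_smL)
  also have "\<dots> = 0" using assms by (simp add: gset_eq) (rule sum.neutral, auto)
  finally show ?thesis .
qed

lemma dense_seq:
  assumes sepa: "h_separable ip" and Y0: "0 \<in> Y"
  shows "\<exists>c::nat \<Rightarrow> 'a. (\<forall>n. c n \<in> Y) \<and> (\<forall>y\<in>Y. \<forall>e>0. \<exists>n. hnorm ip (y - c n) < e)"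
proof -
  obtain D where D: "countable D" "\<forall>x. \<forall>e>0. \<exists>d\<in>D. hnorm ip (x - d) < e"
    using sepa unfolding h_separable_def by blast
  define good where "good d k \<longleftrightarrow> (\<exists>y. y \<in> Y \<and> hnorm ip (y - d) < 1 / real (Suc k))" for d k
  define pk where "pk d k = (SOME y. y \<in> Y \<and> hnorm ip (y - d) < 1 / real (Suc k))" for d k
  have pk: "pk d k \<in> Y \<and> hnorm ip (pk d k - d) < 1 / real (Suc k)" if "good d k" for d k
    using that unfolding good_def pk_def by (rule someI_ex)
  define C where "C = insert 0 ((\<lambda>(d,k). pk d k) ` {(d,k). d \<in> D \<and> good d k})"
  have "countable (D \<times> (UNIV::nat set))" using D(1) by simp
  moreover have "{(d,k). d \<in> D \<and> good d k} \<subseteq> D \<times> (UNIV::nat set)" by auto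
  ultimately have "countable {(d,k). d \<in> D \<and> good d k}" by (rule countable_subset[rotated])
  then have cC: "countable C" unfolding C_def by simp
  have CY: "C \<subseteq> Y" using pk Y0 by (auto simp: C_def)
  define c where "c = from_nat_into C"
  have Cne: "C \<noteq> {}" unfolding C_def by simp
  have rc: "range c = C" unfolding c_def by (rule range_from_nat_into[OF Cne cC])
  have A: "\<forall>n. c n \<in> Y" using rc CY by auto
  have B: "\<exists>n. hnorm ip (y - c n) < e" if y: "y \<in> Y" and e: "e > 0" for y and e :: real
  proof -
    obtain k where k: "1 / real (Suc k) < e / 2" using nat_approx_posE[of "e/2"] e by auto
    have kpos: "1 / real (Suc k) > 0" by simp
    have "\<exists>d\<in>D. hnorm ip (y - d) < 1 / real (Suc k)" using D(2) kpos by simp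
    then obtain d where d: "d \<in> D" "hnorm ip (y - d) < 1 / real (Suc k)" by (elim bexE) simp
    have g: "good d k" unfolding good_def using y d(2) by (intro exI[where x=y]) simp
    have "(d,k) \<in> {(d,k). d \<in> D \<and> good d k}" using d g by simp
    then have "(\<lambda>(d,k). pk d k) (d,k) \<in> (\<lambda>(d,k). pk d k) ` {(d,k). d \<in> D \<and> good d k}"
      by (rule imageI)
    then have "pk d k \<in> C" unfolding C_def by simp
    then have "pk d k \<in> range c" using rc by simp
    then obtain n where n: "pk d k = c n" by (elim rangeE) simp
    have eqn: "y - c n = (y - d) + (d - pk d k)" using n by simp
    have t1: "hnorm ip (y - c n) \<le> hnorm ip (y - d) + hnorm ip (d - pk d k)"
      unfolding eqn by (rule hnorm_triangle)
    have t2: "hnorm ip (d - pk d k) = hnorm ip (pk d k - d)" by (rule hnorm_commute)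
    have "hnorm ip (y - c n) < e" using t1 t2 pk[OF g] d k by linarith
    then show "\<exists>n. hnorm ip (y - c n) < e" by blast
  qed
  show ?thesis using A B by blast
qed

end

locale lctx = cips +
  fixes X :: "'a set"
  assumes subX: "h_subspace sm X" and infX: "infinite_dim sm X" and sep: "h_separable ip"
begin

lemma vsX: "vs.subspace X" using subX by (rule subspace_h)

definition onset :: "'a set \<Rightarrow> bool" where
  "onset L \<longleftrightarrow> (\<forall>a\<in>L. \<forall>b\<in>L. ip a b = (if a = b then 1 else 0))"

lemma next_exists:
  assumes fin: "finite L" and LX: "L \<subseteq> X" and on: "onset L"
  shows "\<exists>v. v \<in> X \<and> ip v v = 1 \<and> (\<forall>l\<in>L. ip l v = 0)"
proof -
  have "\<not> X \<subseteq> cspan sm L" using infX fin unfolding infinite_dim_def by blast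
  then obtain x where x: "x \<in> X" "x \<notin> vs.span L" unfolding cspan_eq by blast
  define S where "S = (\<Sum>l\<in>L. sm (ip x l) l)"
  define w where "w = x - S"
  have SX: "S \<in> X" unfolding S_def
    by (rule vs.subspace_sum[OF vsX]) (use LX vsX in \<open>auto intro: vs.subspace_scale\<close>)
  have wX: "w \<in> X" unfolding w_def by (rule vs.subspace_diff[OF vsX x(1) SX])
  have Sspan: "S \<in> vs.span L" unfolding S_def
    by (rule vs.span_sum) (auto intro: vs.span_scale vs.span_base)
  have wne: "w \<noteq> 0"
  proof
    assume "w = 0"
    then have "x = S" unfolding w_def by simp
    then show False using x(2) Sspan by simp
  qed
  have worth: "ip w l0 = 0" if l0: "l0 \<in> L" for l0
  proof -
    have "ip w l0 = ip x l0 - (\<Sum>l\<in>L. ip x l * ip l l0)"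
      unfolding w_def S_def by (simp add: ip_diffL ip_sumL ip_smL)
    also have "(\<Sum>l\<in>L. ip x l * ip l l0) = (\<Sum>l\<in>L. if l = l0 then ip x l0 else 0)"
      by (rule sum.cong) (use on l0 in \<open>auto simp: onset_def\<close>)
    also have "\<dots> = ip x l0" using fin l0 by simp
    finally show ?thesis by simp
  qed
  define nw where "nw = hnorm ip w"
  have "nw \<noteq> 0" unfolding nw_def using wne hnorm_zero_iff by simp
  then have nwpos: "nw > 0" unfolding nw_def using hnorm_nonneg[of w] by simp
  define r where "r = 1 / nw"
  define v where "v = sm (complex_of_real r) w"
  have ww: "ip w w = complex_of_real (nw^2)" unfolding nw_def hnorm_sq by (rule ip_self_real)
  have "ip v v = complex_of_real r * complex_of_real r * complex_of_real (nw^2)"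
    unfolding v_def by (simp add: ip_smL ip_smR ww)
  also have "\<dots> = 1" unfolding r_def using nwpos by (simp add: power2_eq_square field_simps)
  finally have vv: "ip v v = 1" .
  have vX: "v \<in> X" unfolding v_def by (rule vs.subspace_scale[OF vsX wX])
  have "\<forall>l\<in>L. ip l v = 0" unfolding v_def using worth ip_zero_swap by (simp add: ip_smR)
  then show ?thesis using vv vX by blast
qed

definition pick :: "'a set \<Rightarrow> 'a" where
  "pick L = (SOME v. v \<in> X \<and> ip v v = 1 \<and> (\<forall>l\<in>L. ip l v = 0))"

primrec useq :: "nat \<Rightarrow> 'a set" where
  "useq 0 = {}"
| "useq (Suc n) = insert (pick (useq n)) (useq n)"

definition u :: "nat \<Rightarrow> 'a" where "u n = pick (useq n)"

lemma useq_props: "finite (useq n) \<and> useq n \<subseteq> X \<and> onset (useq n) \<and> useq n = u ` {..<n}"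
proof (induct n)
  case 0 then show ?case by (simp add: onset_def)
next
  case (Suc n)
  then have f: "finite (useq n)" and LX: "useq n \<subseteq> X" and on: "onset (useq n)"
    and eq: "useq n = u ` {..<n}" by auto
  define v where "v = pick (useq n)"
  have "\<exists>v. v \<in> X \<and> ip v v = 1 \<and> (\<forall>l\<in>useq n. ip l v = 0)" by (rule next_exists[OF f LX on])
  then have v: "v \<in> X \<and> ip v v = 1 \<and> (\<forall>l\<in>useq n. ip l v = 0)"
    unfolding v_def pick_def by (rule someI_ex)
  have vn: "v \<notin> useq n" using v by force
  have "onset (insert v (useq n))" unfolding onset_def
  proof (intro ballI)
    fix a b assume a: "a \<in> insert v (useq n)" and b: "b \<in> insert v (useq n)"
    show "ip a b = (if a = b then 1 else 0)"
    proof (cases "a = v")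
      case True
      show ?thesis
      proof (cases "b = v")
        case True then show ?thesis using \<open>a = v\<close> v by simp
      next
        case False
        then have "b \<in> useq n" using b by simp
        then have "ip b v = 0" using v by simp
        then have "ip v b = 0" by (rule ip_zero_swap)
        then show ?thesis using \<open>a = v\<close> False by simp
      qed
    next
      case False
      then have a': "a \<in> useq n" using a by simp
      show ?thesis
      proof (cases "b = v")
        case True then show ?thesis using a' v vn by auto
      next
        case False
        then have "b \<in> useq n" using b by simp
        then show ?thesis using a' on unfolding onset_def by blast
      qed
    qed
  qed
  moreover have "insert v (useq n) = u ` {..<Suc n}" using eq by (simp add: u_def v_def lessThan_Suc)
  moreover have "insert v (useq n) \<subseteq> X" using LX v by simp
  moreover have "finite (insert v (useq n))" using f by simp
  moreover have us: "useq (Suc n) = insert v (useq n)" by (simp add: v_def)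
  ultimately show ?case by (simp only: us)
qed

lemma u_spec: "u n \<in> X \<and> ip (u n) (u n) = 1 \<and> (\<forall>l\<in>useq n. ip l (u n) = 0)"
proof -
  have "\<exists>v. v \<in> X \<and> ip v v = 1 \<and> (\<forall>l\<in>useq n. ip l v = 0)"
    using useq_props[of n] next_exists by blast
  then show ?thesis unfolding u_def pick_def by (rule someI_ex)
qed

lemma u_X: "u n \<in> X" using u_spec by blast

lemma u_less: "m < n \<Longrightarrow> ip (u m) (u n) = 0"
  using u_spec[of n] useq_props[of n] by auto

lemma u_orth: "ip (u m) (u n) = (if m = n then 1 else 0)"
proof -
  consider "m < n" | "m = n" | "n < m" by linarith
  then show ?thesis
  proof cases
    case 1 then show ?thesis using u_less by simp
  next
    case 2 then show ?thesis using u_spec by simp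
  next
    case 3
    then have "ip (u n) (u m) = 0" by (rule u_less)
    then have "ip (u m) (u n) = 0" by (rule ip_zero_swap)
    then show ?thesis using 3 by simp
  qed
qed


lemma main:
  "\<exists>Q. closed_subspace sm ip Q \<and> infinite_dim sm Q \<and> infinite_codim sm Q \<and>
       Q \<inter> orth_compl ip X = {0} \<and> orth_compl ip Q \<inter> orth_compl ip X = {0}"
proof -
  define Y where "Y = orth_compl ip X"
  have Y0: "0 \<in> Y" unfolding Y_def orth_compl_def by simp
  have sY: "vs.subspace Y" unfolding Y_def by (rule subspace_oc)
  obtain c :: "nat \<Rightarrow> 'a" where cY: "\<forall>n. c n \<in> Y"
    and cd: "\<forall>y\<in>Y. \<forall>e>0. \<exists>n. hnorm ip (y - c n) < e"
    using dense_seq[OF sep Y0] by blast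
  define g where "g = gs c"
  have gY: "g n \<in> Y" for n unfolding g_def using gs_in[OF sY cY] by blast
  have XY: "ip x y = 0" if "x \<in> X" "y \<in> Y" for x y
    using that unfolding Y_def orth_compl_def by blast
  have YX: "ip y x = 0" if "x \<in> X" "y \<in> Y" for x y
    using XY[OF that] by (rule ip_zero_swap)
  have tot: "y = 0" if "y \<in> Y" "\<forall>n. ip (g n) y = 0" for y
  proof -
    have "\<forall>n. ip (c n) y = 0" using c_from_gs[of c y] that(2) unfolding g_def by blast
    moreover have "\<forall>e>0. \<exists>n. hnorm ip (y - c n) < e" using cd that(1) by blast
    ultimately show ?thesis by (rule total)
  qed
  define r where "r n = hnorm ip (g n)" for n
  define e where "e n = sm (complex_of_real (r n)) (u (2*n))" for n
  have eX: "e n \<in> X" for n unfolding e_def by (rule vs.subspace_scale[OF vsX u_X])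
  have gg: "ip (g m) (g n) = (if m = n then ip (g n) (g n) else 0)" for m n
    using gs_orth[of m n c] unfolding g_def by simp
  have rr: "complex_of_real (r n) * complex_of_real (r n) = ip (g n) (g n)" for n
  proof -
    have "ip (g n) (g n) = complex_of_real ((r n)^2)" unfolding r_def hnorm_sq by (rule ip_self_real)
    then show ?thesis by (simp add: power2_eq_square)
  qed
  have ee: "ip (e m) (e n) = (if m = n then ip (g n) (g n) else 0)" for m n
    unfolding e_def by (cases "m = n") (simp_all add: ip_smL ip_smR u_orth rr[symmetric])
  define S where "S = range (\<lambda>n. e n - g n) \<union> range (\<lambda>k. u (4*k+1))"
  define Q where "Q = orth_compl ip S"
  have inQ: "q \<in> Q \<longleftrightarrow> (\<forall>s\<in>S. ip s q = 0)" for q unfolding Q_def orth_compl_def by simp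
  have TQ: "e n + g n \<in> Q" for n
    unfolding inQ
  proof (intro ballI)
    fix s assume "s \<in> S"
    then consider m where "s = e m - g m" | k where "s = u (4*k+1)" unfolding S_def by blast
    then show "ip s (e n + g n) = 0"
    proof cases
      case 1
      have "ip s (e n + g n) = ip (e m) (e n) + ip (e m) (g n) - (ip (g m) (e n) + ip (g m) (g n))"
        unfolding 1 by (simp add: ip_diffL ip_addR)
      also have "\<dots> = 0" using ee[of m n] gg[of m n] XY[OF eX gY] YX[OF eX gY] by simp
      finally show ?thesis .
    next
      case 2
      have "4*k+1 \<noteq> 2*n" by presburger
      then have "ip (u (4*k+1)) (u (2*n)) = 0" using u_orth by simp
      then show ?thesis unfolding 2 e_def by (simp add: ip_addR ip_smR XY[OF u_X gY])
    qed
  qed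
  have UQ: "u (4*k+3) \<in> Q" for k
    unfolding inQ
  proof (intro ballI)
    fix s assume "s \<in> S"
    then consider m where "s = e m - g m" | j where "s = u (4*j+1)" unfolding S_def by blast
    then show "ip s (u (4*k+3)) = 0"
    proof cases
      case 1
      have "2*m \<noteq> 4*k+3" by presburger
      then have "ip (u (2*m)) (u (4*k+3)) = 0" using u_orth by simp
      then show ?thesis unfolding 1 e_def by (simp add: ip_diffL ip_smL YX[OF u_X gY])
    next
      case 2
      have "4*j+1 \<noteq> 4*k+3" by presburger
      then show ?thesis unfolding 2 using u_orth by simp
    qed
  qed
  have SQ: "ip (u (4*k+1)) q = 0" if "q \<in> Q" for k q
    using that unfolding inQ S_def by blast
  have P1: "Q \<inter> Y = {0}"
  proof
    show "Q \<inter> Y \<subseteq> {0}"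
    proof
      fix y assume y: "y \<in> Q \<inter> Y"
      have "ip (g n) y = 0" for n
      proof -
        have "e n - g n \<in> S" unfolding S_def by blast
        then have "ip (e n - g n) y = 0" using y inQ by blast
        then have "ip (e n) y - ip (g n) y = 0" by (simp add: ip_diffL)
        moreover have "ip (e n) y = 0" using XY[OF eX] y by blast
        ultimately show ?thesis by simp
      qed
      then have "y = 0" using tot y by blast
      then show "y \<in> {0}" by simp
    qed
    show "{0} \<subseteq> Q \<inter> Y" using Y0 inQ by simp
  qed
  have P2: "orth_compl ip Q \<inter> Y = {0}"
  proof
    show "orth_compl ip Q \<inter> Y \<subseteq> {0}"
    proof
      fix z assume z: "z \<in> orth_compl ip Q \<inter> Y"
      have "ip (g n) z = 0" for n
      proof -
        have "ip (e n + g n) z = 0" using z TQ unfolding orth_compl_def by blast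
        then have "ip (e n) z + ip (g n) z = 0" by (simp add: ip_addL)
        moreover have "ip (e n) z = 0" using XY[OF eX] z by blast
        ultimately show ?thesis by simp
      qed
      then have "z = 0" using tot z by blast
      then show "z \<in> {0}" by simp
    qed
    show "{0} \<subseteq> orth_compl ip Q \<inter> Y" using Y0 unfolding orth_compl_def by simp
  qed
  have P3: "infinite_dim sm Q" unfolding infinite_dim_def
  proof
    assume "\<exists>F. finite F \<and> Q \<subseteq> cspan sm F"
    then obtain F where F: "finite F" "Q \<subseteq> vs.span ({} \<union> F)" unfolding cspan_eq by auto
    have on: "\<forall>i j. ip (u (4*i+3)) (u (4*j+3)) = (if i = j then 1 else 0)" by (simp add: u_orth)
    have "\<exists>k. u (4*k+3) \<notin> vs.span ({} \<union> F)"
      by (rule onseq_not_span[where w="\<lambda>i. u (4*i+3)" and Z="{}" and F=F]) (use on F(1) in simp_all)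
    then obtain k where "u (4*k+3) \<notin> vs.span ({} \<union> F)" by blast
    then show False using UQ F(2) by blast
  qed
  have P4: "infinite_codim sm Q" unfolding infinite_codim_def
  proof
    assume "\<exists>F. finite F \<and> UNIV \<subseteq> cspan sm (Q \<union> F)"
    then obtain F where F: "finite F" "UNIV \<subseteq> vs.span (Q \<union> F)" unfolding cspan_eq by auto
    have on: "\<forall>i j. ip (u (4*i+1)) (u (4*j+1)) = (if i = j then 1 else 0)" by (simp add: u_orth)
    have Z: "\<forall>z\<in>Q. \<forall>k. ip z (u (4*k+1)) = 0" using SQ ip_zero_swap by blast
    have "\<exists>k. u (4*k+1) \<notin> vs.span (Q \<union> F)"
      by (rule onseq_not_span[where w="\<lambda>i. u (4*i+1)" and Z=Q and F=F]) (use on Z F(1) in simp_all)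
    then obtain k where "u (4*k+1) \<notin> vs.span (Q \<union> F)" by blast
    then show False using F(2) by blast
  qed
  have P0: "closed_subspace sm ip Q" unfolding Q_def by (rule closed_subspace_oc)
  show ?thesis using P0 P1 P2 P3 P4 unfolding Y_def by blast
qed

end

theorem lemma4:
  fixes sm :: "complex \<Rightarrow> 'a::ab_group_add \<Rightarrow> 'a"
    and ip :: "'a \<Rightarrow> 'a \<Rightarrow> complex"
    and X :: "'a set"
  assumes "complex_hilbert_space sm ip"
    and "h_separable ip"
    and "infinite_dim sm (UNIV :: 'a set)"
    and "closed_subspace sm ip X"
    and "infinite_dim sm X"
    and "infinite_codim sm X"
  shows "\<exists>Q. closed_subspace sm ip Q \<and> infinite_dim sm Q \<and> infinite_codim sm Q \<and>
             Q \<inter> orth_compl ip X = {0} \<and>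
             orth_compl ip Q \<inter> orth_compl ip X = {0}"
proof -
  have c: "complex_inner_product_space sm ip"
    using assms(1) unfolding complex_hilbert_space_def by blast
  have sX: "h_subspace sm X" using assms(4) unfolding closed_subspace_def by blast
  interpret L: lctx sm ip X
    by unfold_locales (use c sX assms(5) assms(2) in auto)
  show ?thesis by (rule L.main)
qed

end
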